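(* Let $p \geq 1$, let $\boldsymbol \Omega$ be a $p\times p$ positive definite matrix and let $\boldsymbol \Psi$ be a $p\times p$ non-diagonal positive definite matrix with all diagonal entries equal to $1$. Let $\boldsymbol \beta$ have the structured product normal (SPN) prior with parameters $\boldsymbol \Omega, \boldsymbol \Psi$, with marginal density $$p(\boldsymbol b \mid \boldsymbol \Psi, \boldsymbol \Omega) = \int_{\mathbb{R}^p} \Big(\prod_{i=1}^p \frac{1}{|s_i|}\Big)\, \phi_{\boldsymbol \Omega}(\boldsymbol b / \boldsymbol s)\, \phi_{\boldsymbol \Psi}(\boldsymbol s)\, d\boldsymbol s \in [0,+\infty],$$ where $\phi_{\boldsymbol A}$ denotes the $\text{normal}(\boldsymbol 0, \boldsymbol A)$ density and $\boldsymbol b/\boldsymbol s$ is elementwise division. If $\boldsymbol b \in \mathbb{R}^p$ satisfies $b_j = 0$ for some $j \in \{1,\dots,p\}$, then $p(\boldsymbol b \mid \boldsymbol \Psi, \boldsymbol \Omega) = +\infty$.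
   Context: The SPN prior is the distribution of $\boldsymbol \beta = \boldsymbol s \circ \boldsymbol z$ (elementwise product), where $\boldsymbol z \sim \text{normal}(\boldsymbol 0, \boldsymbol \Omega)$ and $\boldsymbol s \sim \text{normal}(\boldsymbol 0, \boldsymbol \Psi)$ are independent; the displayed integral is the resulting marginal (joint) prior density of $\boldsymbol \beta$ at $\boldsymbol b$, allowed to take the value $+\infty$. *)

theory Defs
  imports "HOL-Analysis.Analysis"
begin

definition pos_def_matrix :: "real^'n^'n \<Rightarrow> bool" where
  "pos_def_matrix A \<longleftrightarrow> transpose A = A \<and> (\<forall>x. x \<noteq> 0 \<longrightarrow> x \<bullet> (A *v x) > 0)"

definition diagonal_matrix :: "real^'n^'n \<Rightarrow> bool" where
  "diagonal_matrix A \<longleftrightarrow> (\<forall>i j. i \<noteq> j \<longrightarrow> A $ i $ j = 0)"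

definition normal_density :: "real^'n^'n \<Rightarrow> real^'n \<Rightarrow> real" where
  "normal_density A x =
     (2 * pi) powr (- real CARD('n) / 2) * det A powr (-1/2)
       * exp (- (x \<bullet> (matrix_inv A *v x)) / 2)"

text \<open>The integrand is only specified off the null set where some s_i = 0
  (there, with HOL's convention 1/0 = 0, it is taken to be 0).\<close>
definition spn_density :: "real^'n^'n \<Rightarrow> real^'n^'n \<Rightarrow> real^'n \<Rightarrow> ennreal" where
  "spn_density Psi Omega b =
     (\<integral>\<^sup>+ s. ennreal ((\<Prod>i\<in>UNIV. 1 / \<bar>s $ i\<bar>)
                 * normal_density Omega (\<chi> i. b $ i / s $ i)
                 * normal_density Psi s) \<partial>lborel)"

end

theory Submission
  imports Defs
begin

lemma nd_nonneg: "0 \<le> normal_density A x"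
  unfolding normal_density_def by simp

lemma posdef_det: assumes "pos_def_matrix (A::real^'n^'n)" shows "det A \<noteq> 0"
proof -
  have "inj ((*v) A)"
  proof (rule injI)
    fix x y assume "A *v x = A *v y"
    hence "A *v (x - y) = 0" by (simp add: matrix_vector_mult_diff_distrib)
    hence "(x - y) \<bullet> (A *v (x - y)) = 0" by simp
    note z = this
    from assms have h: "\<forall>x. x \<noteq> 0 \<longrightarrow> 0 < x \<bullet> (A *v x)" unfolding pos_def_matrix_def by blast
    show "x = y"
    proof (rule ccontr)
      assume "x \<noteq> y" hence "x - y \<noteq> 0" by simp
      with h have "0 < (x - y) \<bullet> (A *v (x - y))" by blast
      with z show False by simp
    qed
  qed
  thus ?thesis using det_nz_iff_inj[of "(*v) A"] by (simp add: matrix_of_matrix_vector_mul)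
qed

lemma nd_lower:
  fixes A :: "real^'n^'n"
  assumes "det A \<noteq> 0"
  shows "\<exists>c>0. \<forall>x. norm x \<le> R \<longrightarrow> c \<le> normal_density A x"
proof -
  obtain K where K: "K > 0" "\<And>x. norm (matrix_inv A *v x) \<le> norm x * K"
    using bounded_linear.pos_bounded[OF matrix_vector_mul_bounded_linear[of "matrix_inv A"]] by blast
  define c where "c = (2 * pi) powr (- real CARD('n) / 2) * det A powr (-1/2) * exp (- (R*R*K) / 2)"
  have "c > 0" unfolding c_def using assms by simp
  moreover have "c \<le> normal_density A x" if "norm x \<le> R" for x
  proof -
    have "x \<bullet> (matrix_inv A *v x) \<le> norm x * norm (matrix_inv A *v x)"
      by (metis Cauchy_Schwarz_ineq2 abs_le_iff)
    also have "\<dots> \<le> norm x * (norm x * K)" by (simp add: K(2) mult_left_mono)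
    also have "\<dots> \<le> R * (R * K)"
      using that K(1) order_trans[OF norm_ge_zero[of x] that] by (intro mult_mono) auto
    finally have "exp (- (R*R*K) / 2) \<le> exp (- (x \<bullet> (matrix_inv A *v x)) / 2)" by simp
    thus ?thesis unfolding c_def normal_density_def
      by (intro mult_left_mono) auto
  qed
  ultimately show ?thesis by blast
qed

lemma dyadic_bound:
  fixes t :: real assumes "t > 0"
  shows "(\<Sum>k<N. 2^k * indicator {3/2^(k+2)..1/2^k} t) \<le> 1/t"
proof (induction N)
  case 0 then show ?case using assms by simp
next
  case (Suc N)
  show ?case
  proof (cases "t \<in> {3/2^(N+2)..1/2^N}")
    case True
    have z: "(\<Sum>k<N. 2^k * indicator {3/2^(k+2)..1/2^k} t) = (0::real)"
    proof (rule sum.neutral, safe)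
      fix k assume "k < N"
      hence "(2::real)^(k+1) \<le> 2^N" by (intro power_increasing) auto
      hence a: "(2::real) * 2^k \<le> 2^N" by simp
      have "(0::real) < 2^k" by simp
      with a have "(4::real)*2^k < 3*2^N" by linarith
      hence "3/2^(k+2) > (1::real)/2^N" by (simp add: field_simps)
      with True show "2^k * indicator {3/2^(k+2)..1/2^k} t = (0::real)" by auto
    qed
    have "(2::real)^N \<le> 1/t" using True assms by (simp add: field_simps)
    thus ?thesis using True z by simp
  next
    case False
    thus ?thesis using Suc.IH by simp
  qed
qed


theorem proposition2p1:
  fixes Omega Psi :: "real^'n^'n" and b :: "real^'n"
  assumes "pos_def_matrix Omega"
    and "pos_def_matrix Psi"
    and "\<not> diagonal_matrix Psi"
    and "\<forall>i. Psi $ i $ i = 1"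
    and "\<exists>j. b $ j = 0"
  shows "spn_density Psi Omega b = \<infinity>"
proof -
  obtain j where bj: "b $ j = 0" using assms(5) by blast
  obtain c1 where c1: "c1 > 0" "\<And>x. norm x \<le> norm b \<Longrightarrow> c1 \<le> normal_density Omega x"
    using nd_lower[OF posdef_det[OF assms(1)], of "norm b"] by blast
  define two :: "real^'n" where "two = (\<chi> i. 2)"
  obtain c2 where c2: "c2 > 0" "\<And>x. norm x \<le> norm two \<Longrightarrow> c2 \<le> normal_density Psi x"
    using nd_lower[OF posdef_det[OF assms(2)], of "norm two"] by blast
  define c where "c = (1/2)^CARD('n) * c1 * c2"
  have c_pos: "c > 0" unfolding c_def using c1 c2 by simp
  define f where "f s = (\<Prod>i\<in>UNIV. 1 / \<bar>s $ i\<bar>) * normal_density Omega (\<chi> i. b $ i / s $ i)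
                 * normal_density Psi s" for s :: "real^'n"
  define C where "C = {s::real^'n. \<forall>i. i \<noteq> j \<longrightarrow> 1 \<le> s$i \<and> s$i \<le> 2}"
  have f_nonneg: "0 \<le> f s" for s
    unfolding f_def by (intro mult_nonneg_nonneg prod_nonneg nd_nonneg) auto
  have f_lower: "c / s$j \<le> f s" if s: "s \<in> C" "0 < s$j" "s$j \<le> 1" for s
  proof -
    have "norm (\<chi> i. b $ i / s $ i) \<le> norm b"
    proof (rule norm_le_componentwise_cart)
      fix i
      show "norm ((\<chi> i. b $ i / s $ i) $ i) \<le> norm (b $ i)"
      proof (cases "i = j")
        case True then show ?thesis using bj by simp
      next
        case False
        hence "1 \<le> \<bar>s$i\<bar>" using s(1) unfolding C_def by auto
        hence "\<bar>b$i\<bar> / \<bar>s$i\<bar> \<le> \<bar>b$i\<bar> / 1" by (intro divide_left_mono) auto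
        thus ?thesis by (simp add: abs_divide)
      qed
    qed
    hence n1: "c1 \<le> normal_density Omega (\<chi> i. b $ i / s $ i)" using c1 by blast
    have "norm s \<le> norm two"
    proof (rule norm_le_componentwise_cart)
      fix i
      show "norm (s $ i) \<le> norm (two $ i)"
        using s unfolding C_def two_def by (cases "i = j") auto
    qed
    hence n2: "c2 \<le> normal_density Psi s" using c2 by blast
    have "(\<Prod>i\<in>UNIV. 1 / \<bar>s $ i\<bar>) = 1 / \<bar>s$j\<bar> * (\<Prod>i\<in>UNIV-{j}. 1 / \<bar>s $ i\<bar>)"
      by (simp add: prod.remove)
    moreover have "(1/2)^CARD('n) \<le> (\<Prod>i\<in>UNIV-{j}. 1 / \<bar>s $ i\<bar>)"
    proof -
      have "(1/2::real)^CARD('n) \<le> (1/2)^card (UNIV-{j::'n})"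
        by (intro power_decreasing) (auto simp: card_Diff_subset)
      also have "\<dots> = (\<Prod>i\<in>UNIV-{j}. 1/2)" by simp
      also have "\<dots> \<le> (\<Prod>i\<in>UNIV-{j}. 1 / \<bar>s $ i\<bar>)"
      proof (rule prod_mono, safe)
        fix i assume "i \<noteq> j"
        hence "1 \<le> s$i" "s$i \<le> 2" using s(1) unfolding C_def by auto
        thus "(0::real) \<le> 1/2" "1/2 \<le> 1 / \<bar>s $ i\<bar>" by (auto simp: field_simps)
      qed
      finally show ?thesis .
    qed
    ultimately have p: "1 / s$j * (1/2)^CARD('n) \<le> (\<Prod>i\<in>UNIV. 1 / \<bar>s $ i\<bar>)"
      using s(2) by (auto intro!: divide_right_mono)
    have "c / s$j = (1 / s$j * (1/2)^CARD('n)) * c1 * c2" unfolding c_def by simp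
    also have "\<dots> \<le> f s" unfolding f_def
      using p n1 n2 c1 c2 s(2) by (intro mult_mono) (auto intro!: prod_nonneg mult_nonneg_nonneg nd_nonneg)
    finally show ?thesis .
  qed
  define lo where "lo k = ((\<chi> i. if i = j then 3/2^(k+2) else (1::real)) :: real^'n)" for k :: nat
  define hi where "hi k = ((\<chi> i. if i = j then 1/2^k else (2::real)) :: real^'n)" for k :: nat
  have memB: "s \<in> cbox (lo k) (hi k) \<longleftrightarrow> s \<in> C \<and> s$j \<in> {3/2^(k+2)..1/2^k}" for s k
    unfolding mem_box_cart lo_def hi_def C_def by (auto split: if_splits)
  have meas: "emeasure lborel (cbox (lo k) (hi k)) = ennreal (1/2^(k+2))" for k
  proof -
    have ne: "cbox (lo k) (hi k) \<noteq> {}"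
    proof -
      have "(3::real)/2^(k+2) \<le> 1/2^k" by (simp add: field_simps)
      hence "lo k \<in> cbox (lo k) (hi k)" unfolding mem_box_cart lo_def hi_def by auto
      thus ?thesis by blast
    qed
    have "emeasure lborel (cbox (lo k) (hi k)) = ennreal (measure lborel (cbox (lo k) (hi k)))"
      using emeasure_lborel_cbox_finite[of "lo k" "hi k"] by (intro emeasure_eq_ennreal_measure) auto
    also have "measure lborel (cbox (lo k) (hi k)) = (\<Prod>i\<in>UNIV. if i = j then 1/2^k - 3/2^(k+2) else 1)"
      using ne by (simp add: content_cbox_cart lo_def hi_def if_distrib cong: if_cong)
    also have "\<dots> = 1/2^k - 3/2^(k+2)" by simp
    also have "\<dots> = 1/2^(k+2)" by (simp add: field_simps)
    finally show ?thesis .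
  qed
  have pw: "(\<Sum>k<N. ennreal (c*2^k) * indicator (cbox (lo k) (hi k)) s) \<le> ennreal (f s)" for N s
  proof -
    have e: "(\<Sum>k<N. ennreal (c*2^k) * indicator (cbox (lo k) (hi k)) s)
          = ennreal (\<Sum>k<N. c*2^k * indicator (cbox (lo k) (hi k)) s)"
    proof -
      have "(\<Sum>k<N. ennreal (c*2^k) * indicator (cbox (lo k) (hi k)) s)
          = (\<Sum>k<N. ennreal (c*2^k * indicator (cbox (lo k) (hi k)) s))"
        by (intro sum.cong) (auto split: split_indicator)
      also have "\<dots> = ennreal (\<Sum>k<N. c*2^k * indicator (cbox (lo k) (hi k)) s)"
        using c_pos by (intro sum_ennreal) auto
      finally show ?thesis .
    qed
    have "(\<Sum>k<N. c*2^k * indicator (cbox (lo k) (hi k)) s) \<le> f s"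
    proof (cases "s \<in> C \<and> 0 < s$j \<and> s$j \<le> 1")
      case True
      have "(\<Sum>k<N. c*2^k * indicator (cbox (lo k) (hi k)) s)
          = c * (\<Sum>k<N. 2^k * indicator {3/2^(k+2)..1/2^k} (s$j))"
        unfolding sum_distrib_left using True
        by (intro sum.cong) (auto simp: memB split: split_indicator)
      also have "\<dots> \<le> c * (1 / s$j)"
        using True c_pos by (intro mult_left_mono dyadic_bound) auto
      also have "\<dots> \<le> f s" using f_lower True by simp
      finally show ?thesis .
    next
      case False
      have "(\<Sum>k<N. c*2^k * indicator (cbox (lo k) (hi k)) s) = 0"
      proof (rule sum.neutral, safe)
        fix k
        have h1: "(0::real) < 3/2^(k+2)" and h2: "(1::real)/2^k \<le> 1" by simp_all
        have "s \<notin> cbox (lo k) (hi k)"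
        proof
          assume "s \<in> cbox (lo k) (hi k)"
          hence "s \<in> C \<and> 3/2^(k+2) \<le> s$j \<and> s$j \<le> 1/2^k"
            unfolding memB atLeastAtMost_iff .
          with h1 h2 False show False by linarith
        qed
        thus "c*2^k * indicator (cbox (lo k) (hi k)) s = 0" by simp
      qed
      thus ?thesis using f_nonneg by simp
    qed
    thus ?thesis unfolding e by (rule ennreal_leI)
  qed
  have lb: "ennreal (real N * (c/4)) \<le> spn_density Psi Omega b" for N
  proof -
    have "ennreal (real N * (c/4)) = (\<Sum>k<N. ennreal (c/4))"
      using c_pos by (subst sum_ennreal) auto
    also have "\<dots> = (\<Sum>k<N. ennreal (c*2^k) * emeasure lborel (cbox (lo k) (hi k)))"
    proof (intro sum.cong refl)
      fix k
      have "c/4 = c*2^k * (1/2^(k+2))" by (simp add: field_simps)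
      thus "ennreal (c/4) = ennreal (c*2^k) * emeasure lborel (cbox (lo k) (hi k))"
        unfolding meas using c_pos by (simp add: ennreal_mult[symmetric])
    qed
    also have "\<dots> = (\<integral>\<^sup>+ s. (\<Sum>k<N. ennreal (c*2^k) * indicator (cbox (lo k) (hi k)) s) \<partial>lborel)"
      by (subst nn_integral_sum) (auto simp: nn_integral_cmult_indicator)
    also have "\<dots> \<le> (\<integral>\<^sup>+ s. ennreal (f s) \<partial>lborel)"
      by (intro nn_integral_mono pw)
    also have "\<dots> = spn_density Psi Omega b" unfolding spn_density_def f_def by simp
    finally show ?thesis .
  qed
  show ?thesis
  proof (rule ccontr)
    assume "spn_density Psi Omega b \<noteq> \<infinity>"
    then obtain r where r: "spn_density Psi Omega b = ennreal r" "0 \<le> r"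
      using ennreal_cases[of "spn_density Psi Omega b"] by auto
    obtain N where N: "4 * r / c < real N" using reals_Archimedean2 by blast
    hence "r < real N * (c/4)" using c_pos by (simp add: field_simps)
    hence "ennreal r < ennreal (real N * (c/4))" using r(2) by (simp add: ennreal_less_iff)
    with lb[of N] r(1) show False by simp
  qed
qed

end
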